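(* Let $p$ be an odd prime, $s$ a nonnegative integer, and $N,n$ positive integers with $\gcd(n,p)=1$. Then $$E_{np^N+s}\equiv E_{np^{N-1}+s}\pmod{p^N},$$ i.e. the difference lies in $p^N\mathbb Z_p$.
   Context: The Euler numbers $E_m$ are defined by $\frac{2}{e^t+1}=\sum_{m\ge0}E_m\frac{t^m}{m!}$. *)

theory Defs
  imports "HOL-Computational_Algebra.Computational_Algebra"
begin

definition euler_num :: "nat \<Rightarrow> rat" where
  "euler_num m = fact m * fps_nth (2 / (fps_exp 1 + 1)) m"

text \<open>Congruence of rationals modulo p^N in Z_p: the difference lies in p^N Z_p,
  i.e. it equals p^N * a / b with integers a, b and b not divisible by p.\<close>
definition rat_cong_ppow :: "nat \<Rightarrow> nat \<Rightarrow> rat \<Rightarrow> rat \<Rightarrow> bool" where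
  "rat_cong_ppow p N x y \<longleftrightarrow>
     (\<exists>a b :: int. \<not> (int p dvd b) \<and> x - y = of_int (int p ^ N) * of_int a / of_int b)"

end

theory Submission
  imports Defs "HOL-Number_Theory.Number_Theory"
begin

definition fscale :: "rat \<Rightarrow> rat fps \<Rightarrow> rat fps" where
  "fscale c f = Abs_fps (\<lambda>m. c^m * f$m)"

lemma fscale_nth[simp]: "fscale c f $ m = c^m * f$m"
  by (simp add: fscale_def)

lemma fscale_mult: "fscale c (f*g) = fscale c f * fscale c g"
proof (rule fps_ext)
  fix n
  have "fscale c (f*g) $ n = (\<Sum>i=0..n. c^n * (f$i * g$(n-i)))"
    by (simp add: fps_mult_nth sum_distrib_left)
  also have "\<dots> = (\<Sum>i=0..n. c^i * f$i * (c^(n-i) * g$(n-i)))"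
  proof (rule sum.cong[OF refl])
    fix i assume "i \<in> {0..n}"
    then have "c^n = c^i * c^(n-i)" by (simp add: power_add[symmetric])
    then show "c^n * (f$i * g$(n-i)) = c^i * f$i * (c^(n-i) * g$(n-i))" by simp
  qed
  also have "\<dots> = (fscale c f * fscale c g) $ n"
    by (simp add: fps_mult_nth)
  finally show "fscale c (f*g) $ n = (fscale c f * fscale c g) $ n" .
qed

lemma fscale_add: "fscale c (f+g) = fscale c f + fscale c g"
  by (rule fps_ext) (simp add: algebra_simps)

lemma fscale_exp: "fscale c (fps_exp a) = fps_exp (c*a)"
  by (rule fps_ext) (simp add: power_mult_distrib)

lemma fscale_2: "fscale c 2 = 2"
  by (rule fps_ext) (simp add: numeral_fps_const)

lemma fscale_1: "fscale c 1 = 1"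
  by (rule fps_ext) simp

abbreviation FF :: "rat fps" where "FF \<equiv> 2 / (fps_exp 1 + 1)"

lemma FF_eq: "FF * (fps_exp 1 + 1) = 2"
proof -
  have "(fps_exp 1 + 1 :: rat fps) $ 0 \<noteq> 0" by simp
  then show ?thesis
    by (simp add: fps_divide_unit mult.assoc inverse_mult_eq_1)
qed

definition SS :: "nat \<Rightarrow> rat fps" where
  "SS k = (\<Sum>j<k. fps_const ((-1)^j) * fps_exp (of_nat j))"

lemma ring_aux: "(S'::'a::comm_ring_1) = S + c*e \<Longrightarrow> S*(x+1) = 1 - c*e \<Longrightarrow> S'*(x+1) = 1 + c*(e*x)"
  by (simp add: algebra_simps)

lemma SS_mult: "SS k * (fps_exp 1 + 1) = 1 - fps_const ((-1)^k) * fps_exp (of_nat k)"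
proof (induction k)
  case 0 then show ?case by (simp add: SS_def)
next
  case (Suc k)
  have a: "SS (Suc k) = SS k + fps_const ((-1)^k) * fps_exp (of_nat k)"
    by (simp add: SS_def)
  have "SS (Suc k) * (fps_exp 1 + 1) = 1 + fps_const ((-1)^k) * (fps_exp (of_nat k) * fps_exp 1)"
    by (rule ring_aux[OF a Suc.IH])
  also have "fps_exp (of_nat k) * fps_exp 1 = fps_exp (of_nat (Suc k) :: rat)"
    by (simp add: fps_exp_add_mult[symmetric] add.commute)
  finally have e: "SS (Suc k) * (fps_exp 1 + 1) = 1 + fps_const ((-1)^k) * fps_exp (of_nat (Suc k))" .
  have c: "fps_const ((-1::rat)^Suc k) = - fps_const ((-1)^k)"
    by (rule fps_ext) simp
  show ?case unfolding c e by (simp only: mult_minus_left diff_minus_eq_add)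
qed

lemma FF_scale:
  assumes "odd k"
  shows "FF = fscale (of_nat k) FF * SS k"
proof -
  have u: "(fps_exp 1 + 1 :: rat fps) $ 0 \<noteq> 0" by simp
  have "fscale (of_nat k) FF * (fps_exp (of_nat k) + 1) = 2"
  proof -
    have "fscale (of_nat k) (FF * (fps_exp 1 + 1)) = fscale (of_nat k) 2"
      by (simp only: FF_eq)
    then show ?thesis
      by (simp only: fscale_mult fscale_add fscale_exp fscale_1 fscale_2 mult_1_right)
  qed
  moreover have "SS k * (fps_exp 1 + 1) = fps_exp (of_nat k) + 1"
  proof -
    have "fps_const ((-1::rat)^k) = - 1" using assms by (rule_tac fps_ext) simp
    then show ?thesis unfolding SS_mult
      by (simp only: mult_minus_left mult_1_left diff_minus_eq_add add.commute)
  qed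
  ultimately have "fscale (of_nat k) FF * SS k * (fps_exp 1 + 1) = FF * (fps_exp 1 + 1)"
    by (simp add: FF_eq mult.assoc)
  then have "fscale (of_nat k) FF * SS k * (fps_exp 1 + 1) * inverse (fps_exp 1 + 1)
     = FF * (fps_exp 1 + 1) * inverse (fps_exp 1 + 1)" by simp
  then show ?thesis using inverse_mult_eq_1'[OF u] by (simp add: mult.assoc fps_divide_unit[OF u])
qed

lemma exp1_nth: "(fps_exp 1 + 1 :: rat fps) $ l = 1 / fact l + (if l = 0 then 1 else 0)"
  by simp

lemma two_nth: "(2 :: rat fps) $ m = (if m = 0 then 2 else 0)"
  by (simp add: numeral_fps_const)

lemma FF_rec: "(\<Sum>i=0..m. FF$i / fact (m-i)) + FF$m = (if m=0 then 2 else 0)"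
proof -
  have "(if m=0 then 2 else 0) = (FF*(fps_exp 1+1))$m"
    by (simp only: FF_eq two_nth)
  also have "\<dots> = (\<Sum>i=0..m. FF$i * (1 / fact (m-i) + (if m - i = 0 then 1 else 0)))"
    by (simp only: fps_mult_nth exp1_nth)
  also have "\<dots> = (\<Sum>i=0..m. FF$i / fact (m-i)) + (\<Sum>i=0..m. if i = m then FF$i else 0)"
  proof -
    have "\<And>i. i \<in> {0..m} \<Longrightarrow> FF$i * (1 / fact (m-i) + (if m - i = 0 then 1 else 0))
       = FF$i / fact (m-i) + (if i = m then FF$i else 0)" by auto
    then show ?thesis by (simp only: sum.distrib[symmetric] cong: sum.cong)
  qed
  also have "(\<Sum>i=0..m. if i = m then FF$i else 0) = FF$m"
    by (simp add: sum.delta')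
  finally show ?thesis by simp
qed

lemma binom_aux: "i \<le> m \<Longrightarrow> fact m * x / fact (m-i) = of_nat (m choose i) * (fact i * x :: rat)"
  by (simp add: binomial_fact field_simps)

lemma euler_rec: "(\<Sum>i=0..m. of_nat (m choose i) * euler_num i) + euler_num m = (if m=0 then 2 else 0)"
proof -
  have "fact m * ((\<Sum>i=0..m. FF$i / fact (m-i)) + FF$m) = fact m * (if m=0 then 2 else (0::rat))"
    by (simp only: FF_rec)
  moreover have "(\<Sum>x=0..m. fact m * FF$x / fact(m-x)) = (\<Sum>x=0..m. of_nat (m choose x) * (fact x * FF$x))"
    by (rule sum.cong) (auto simp: binom_aux)
  ultimately show ?thesis
    by (simp add: distrib_left sum_distrib_left euler_num_def)
qed

lemma euler0: "euler_num 0 = 1"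
  using euler_rec[of 0] by simp

lemma euler_Ints: "2^m * euler_num m \<in> \<int>"
proof (induction m rule: less_induct)
  case (less m)
  show ?case
  proof (cases m)
    case 0 then show ?thesis by (simp add: euler0)
  next
    case (Suc m')
    have r0: "(\<Sum>i=0..Suc m'. of_nat (Suc m' choose i) * euler_num i) + euler_num (Suc m') = 0"
      using euler_rec[of "Suc m'"] by simp
    have r: "(\<Sum>i=0..m'. of_nat (m choose i) * euler_num i) + 2 * euler_num m = 0"
      using r0 unfolding sum.atLeast0_atMost_Suc Suc by simp
    have "2^m * euler_num m = 2^m' * (2 * euler_num m)" using Suc by simp
    also have "2 * euler_num m = - (\<Sum>i=0..m'. of_nat (m choose i) * euler_num i)"
      using r by linarith
    also have "2^m' * - (\<Sum>i=0..m'. of_nat (m choose i) * euler_num i)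
        = - (\<Sum>i=0..m'. of_nat (m choose i) * 2^(m'-i) * (2^i * euler_num i))"
    proof -
      have "\<And>i. i \<in> {0..m'} \<Longrightarrow> 2^m' * (of_nat (m choose i) * euler_num i)
          = of_nat (m choose i) * 2^(m'-i) * (2^i * euler_num i :: rat)"
      proof -
        fix i assume "i \<in> {0..m'}"
        then have "(2::rat)^m' = 2^(m'-i) * 2^i" by (simp add: power_add[symmetric])
        then show "2^m' * (of_nat (m choose i) * euler_num i)
          = of_nat (m choose i) * 2^(m'-i) * (2^i * euler_num i :: rat)" by simp
      qed
      then have "(\<Sum>i=0..m'. 2^m' * (of_nat (m choose i) * euler_num i))
          = (\<Sum>i=0..m'. of_nat (m choose i) * 2^(m'-i) * (2^i * euler_num i :: rat))"
        by (rule sum.cong[OF refl])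
      then show ?thesis by (simp only: sum_distrib_left mult_minus_right)
    qed
    finally have e: "2^m * euler_num m = - (\<Sum>i=0..m'. of_nat (m choose i) * 2^(m'-i) * (2^i * euler_num i))" .
    have "\<And>i. i \<in> {0..m'} \<Longrightarrow> of_nat (m choose i) * 2^(m'-i) * (2^i * euler_num i) \<in> \<int>"
    proof -
      fix i assume "i \<in> {0..m'}"
      then have "i < m" using Suc by auto
      then have h: "2^i * euler_num i \<in> \<int>" by (rule less.IH)
      have "of_nat (m choose i) * 2^(m'-i) \<in> (\<int> :: rat set)" by simp
      then show "of_nat (m choose i) * 2^(m'-i) * (2^i * euler_num i) \<in> \<int>"
        using h by (rule Ints_mult)
    qed
    then show ?thesis unfolding e by (intro Ints_minus Ints_sum) auto
  qed
qed

definition AA :: "nat \<Rightarrow> nat \<Rightarrow> rat" where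
  "AA k l = (\<Sum>j<k. (-1)^j * of_nat j ^ l)"

lemma SS_nth: "SS k $ l = AA k l / fact l"
  by (simp add: SS_def AA_def fps_sum_nth sum_divide_distrib)

lemma FF_coef: "odd k \<Longrightarrow> FF$m = (\<Sum>i=0..m. of_nat k^i * FF$i * (AA k (m-i) / fact (m-i)))"
proof -
  assume k: "odd k"
  have "FF$m = (fscale (of_nat k) FF * SS k)$m" using FF_scale[OF k] by simp
  then show ?thesis by (simp add: fps_mult_nth SS_nth)
qed

lemma euler_scale: "odd k \<Longrightarrow> euler_num m = (\<Sum>i=0..m. of_nat (m choose i) * of_nat k^i * euler_num i * AA k (m-i))"
proof -
  assume k: "odd k"
  have "euler_num m = (\<Sum>i=0..m. fact m * (of_nat k^i * FF$i * AA k (m-i)) / fact (m-i))"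
    unfolding euler_num_def by (subst FF_coef[OF k]) (simp add: sum_distrib_left)
  also have "\<dots> = (\<Sum>i=0..m. of_nat (m choose i) * (fact i * (of_nat k^i * FF$i * AA k (m-i))))"
    by (rule sum.cong) (auto simp: binom_aux)
  also have "\<dots> = (\<Sum>i=0..m. of_nat (m choose i) * of_nat k^i * euler_num i * AA k (m-i))"
    by (rule sum.cong) (auto simp: euler_num_def)
  finally show ?thesis .
qed

definition ee :: "nat \<Rightarrow> int" where "ee m = \<lfloor>2^m * euler_num m\<rfloor>"

lemma ee: "of_int (ee m) = 2^m * euler_num m"
proof -
  obtain z where z: "2^m * euler_num m = of_int z" using euler_Ints[of m] by (auto elim: Ints_cases)
  then show ?thesis by (simp add: ee_def)
qed

lemma ee0: "ee 0 = 1"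
  using ee[of 0] by (simp add: euler0)

definition AI :: "nat \<Rightarrow> nat \<Rightarrow> int" where
  "AI k l = (\<Sum>j<k. (-1)^j * int j ^ l)"

lemma AI: "of_int (AI k l) = AA k l"
  by (simp add: AI_def AA_def)

lemma ee_scale:
  assumes k: "odd k"
  shows "ee m = (\<Sum>i=0..m. int (m choose i) * int k^i * 2^(m-i) * ee i * AI k (m-i))"
proof -
  have "(of_int (ee m) :: rat) = 2^m * (\<Sum>i=0..m. of_nat (m choose i) * of_nat k^i * euler_num i * AA k (m-i))"
    by (simp add: ee euler_scale[OF k, of m, symmetric])
  also have "\<dots> = (\<Sum>i=0..m. of_nat (m choose i) * of_nat k^i * 2^(m-i) * (2^i * euler_num i) * AA k (m-i))"
    unfolding sum_distrib_left
  proof (rule sum.cong[OF refl])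
    fix i assume "i \<in> {0..m}"
    then have "(2::rat)^m = 2^(m-i) * 2^i" by (simp add: power_add[symmetric])
    then show "2^m * (of_nat (m choose i) * of_nat k^i * euler_num i * AA k (m-i))
      = of_nat (m choose i) * of_nat k^i * 2^(m-i) * (2^i * euler_num i) * AA k (m-i)" by simp
  qed
  also have "\<dots> = of_int (\<Sum>i=0..m. int (m choose i) * int k^i * 2^(m-i) * ee i * AI k (m-i))"
    by (simp add: ee AI)
  finally show ?thesis by (simp only: of_int_eq_iff)
qed

lemma ee_cong:
  assumes k: "odd k"
  shows "int k dvd ee m - 2^m * AI k m"
proof -
  have "ee m = 2^m * AI k m + (\<Sum>i=Suc 0..m. int (m choose i) * int k^i * 2^(m-i) * ee i * AI k (m-i))"
    unfolding ee_scale[OF k, of m] by (simp add: sum.atLeast_Suc_atMost ee0)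
  moreover have "int k dvd (\<Sum>i=Suc 0..m. int (m choose i) * int k^i * 2^(m-i) * ee i * AI k (m-i))"
  proof (rule dvd_sum)
    fix i assume "i \<in> {Suc 0..m}"
    then have "int k dvd int k ^ i" by (simp add: dvd_power)
    then show "int k dvd int (m choose i) * int k^i * 2^(m-i) * ee i * AI k (m-i)" by simp
  qed
  ultimately show ?thesis by simp
qed

lemma pow_term_cong:
  fixes p N n s j :: nat
  assumes p: "prime p" "odd p" and N: "N > 0" and n: "n > 0"
  shows "int (p^N) dvd int j ^ (n * p ^ N + s) - int j ^ (n * p ^ (N - 1) + s)"
proof -
  define M2 where "M2 = n * p ^ (N - 1) + s"
  define t where "t = p ^ (N-1) * (p - 1)"
  have p1: "p \<ge> 2" using p prime_ge_2_nat by blast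
  have pN: "p^N = p^(N-1) * p" using N by (cases N) auto
  have "p^(N-1) * p = p^(N-1) + t" unfolding t_def using p1
    by (cases p) (auto simp: algebra_simps)
  then have M1: "n * p ^ N + s = M2 + n * t" unfolding M2_def pN by (simp add: algebra_simps)
  show ?thesis
  proof (cases "p dvd j")
    case True
    have "N - 1 < 2^(N-1)" by (rule less_exp)
    also have "(2::nat)^(N-1) \<le> p^(N-1)" using p1 by (rule power_mono) simp
    also have "p^(N-1) \<le> n * p^(N-1)" using n by simp
    finally have NM2: "N \<le> M2" unfolding M2_def using N by linarith
    have "p^N dvd j^N" using True by (simp add: dvd_power_same)
    moreover have "j^N dvd j^M2" using NM2 by (simp add: le_imp_power_dvd)
    moreover have "j^N dvd j^(M2 + n*t)" using NM2 by (simp add: le_imp_power_dvd)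
    ultimately have "p^N dvd j^M2" "p^N dvd j^(M2 + n*t)" using dvd_trans by blast+
    then have "int (p^N) dvd int (j^(M2 + n*t)) - int (j^M2)"
      by (simp only: int_dvd_int_iff dvd_diff)
    then show ?thesis unfolding M1 M2_def[symmetric] by simp
  next
    case False
    then have "coprime j p" using p(1) by (metis coprime_commute prime_imp_coprime)
    then have "coprime j (p^N)" by simp
    then have "[j ^ totient (p^N) = 1] (mod p^N)" by (rule euler_theorem)
    moreover have "totient (p^N) = t" unfolding t_def using p(1) N by (rule totient_prime_power)
    ultimately have "[j ^ t = 1] (mod p^N)" by simp
    then have "[(j ^ t)^n = 1^n] (mod p^N)" by (rule cong_pow)
    then have "[j^M2 * (j ^ t)^n = j^M2 * 1^n] (mod p^N)" by (rule cong_scalar_left)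
    moreover have "j^(M2 + n*t) = j^M2 * (j^t)^n"
      by (metis power_add power_mult mult.commute)
    ultimately have "[j^(M2 + n*t) = j^M2] (mod p^N)"
      by simp
    then have "[int (j^(M2 + n*t)) = int (j^M2)] (mod int (p^N))" by (simp only: cong_int_iff)
    then have "int (p^N) dvd int (j^(M2 + n*t)) - int (j^M2)" by (simp add: cong_iff_dvd_diff)
    then show ?thesis unfolding M1 M2_def[symmetric] by simp
  qed
qed

theorem corollary5p2:
  fixes p s N n :: nat
  assumes "prime p" and "odd p" and "N > 0" and "n > 0" and "coprime n p"
  shows "rat_cong_ppow p N (euler_num (n * p ^ N + s)) (euler_num (n * p ^ (N - 1) + s))"
proof -
  define M1 where "M1 = n * p ^ N + s"
  define M2 where "M2 = n * p ^ (N - 1) + s"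
  define k where "k = p ^ N"
  have k: "odd k" unfolding k_def using assms(2) by simp
  have "p^(N-1) \<le> p^N" using assms(1) by (intro power_increasing) (auto simp: prime_ge_Suc_0_nat)
  then have M12: "M2 \<le> M1" unfolding M1_def M2_def by simp
  have AIc: "int k dvd AI k M1 - AI k M2"
  proof -
    have "AI k M1 - AI k M2 = (\<Sum>j<k. (-1)^j * (int j ^ M1 - int j ^ M2))"
      by (simp add: AI_def sum_subtractf right_diff_distrib)
    also have "int k dvd \<dots>"
      by (intro dvd_sum dvd_mult) (use pow_term_cong[OF assms(1-4)] in \<open>simp add: k_def M1_def M2_def\<close>)
    finally show ?thesis .
  qed
  define D where "D = ee M1 - 2^(M1-M2) * ee M2"
  have p2: "(2::int)^(M1-M2) * 2^M2 = 2^M1" using M12 by (simp add: power_add[symmetric])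
  have "D = (ee M1 - 2^M1 * AI k M1) - 2^(M1-M2) * (ee M2 - 2^M2 * AI k M2) + 2^M1 * (AI k M1 - AI k M2)"
    unfolding D_def using p2 by (simp add: algebra_simps flip: p2)
  then have "int k dvd D" using ee_cong[OF k, of M1] ee_cong[OF k, of M2] AIc
    by (simp add: dvd_diff dvd_add)
  then obtain a where a: "D = int k * a" by blast
  have p2r: "(2::rat)^(M1-M2) * 2^M2 = 2^M1" using M12 by (simp add: power_add[symmetric])
  have E: "euler_num M = of_int (ee M) / 2^M" for M using ee[of M] by (simp add: field_simps)
  have "euler_num M1 - euler_num M2 = of_int D / 2^M1"
    unfolding E D_def by (simp add: field_simps flip: p2r)
  also have "\<dots> = of_int (int p ^ N) * of_int a / of_int (2^M1)"
    unfolding a k_def by simp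
  finally have eq: "euler_num M1 - euler_num M2 = of_int (int p ^ N) * of_int a / of_int (2^M1)" .
  have nd: "\<not> int p dvd 2^M1"
  proof
    assume "int p dvd 2^M1"
    moreover have "prime (int p)" using assms(1) by simp
    ultimately have "int p dvd 2" using prime_dvd_power by blast
    then have "p dvd 2" by presburger
    then show False using assms(1,2) by (metis dvd_antisym even_numeral nat_dvd_1_iff_1 not_prime_1 prime_nat_iff two_is_prime_nat)
  qed
  show ?thesis unfolding rat_cong_ppow_def M1_def[symmetric] M2_def[symmetric]
    using eq nd by blast
qed

end
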